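(* Let $V$ be a vector space over a field $F$, let $n\ge1$, and let $(p_j^+,p_j^-)_{j=1}^n$ be a valid widget in $V$. Fix $i\in\{1,\dots,n\}$ and $c\in F$. Then the widget obtained by replacing $p_i^+$ with $p_i^+ + c\,p_i^-$ (and leaving all other points unchanged) is again valid.
   Context: A widget with $n$ pairs in $V$ is an indexed family of $n$ pairs of vectors $p_j=(p_j^+,p_j^-)$, $j=1,\dots,n$, in $V$. A section of a widget is a set of points containing at most one point from each pair. A widget with $n$ pairs is legal if every section spans a linear subspace of $V$ of dimension at most $n-1$. A widget with $n$ pairs is full if the linear span of all its $2n$ points has dimension at least $n$. A widget is valid if it is both legal and full. *)

theory Defs
  imports Main "HOL.Vector_Spaces"
begin

text \<open>A widget with n pairs is a family p :: nat => 'v * 'v, indexed by j in {1..n};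
  p j = (p_j^+, p_j^-) (fst = plus point, snd = minus point).\<close>

definition widget_section :: "nat \<Rightarrow> (nat \<Rightarrow> 'v \<times> 'v) \<Rightarrow> 'v set \<Rightarrow> bool" where
  "widget_section n p S \<longleftrightarrow>
     (\<exists>J \<sigma>. J \<subseteq> {1..n} \<and> (\<forall>j\<in>J. \<sigma> j \<in> {fst (p j), snd (p j)}) \<and> S = \<sigma> ` J)"

definition widget_points :: "nat \<Rightarrow> (nat \<Rightarrow> 'v \<times> 'v) \<Rightarrow> 'v set" where
  "widget_points n p = fst ` p ` {1..n} \<union> snd ` p ` {1..n}"

context vector_space
begin

definition legal_widget :: "nat \<Rightarrow> (nat \<Rightarrow> 'b \<times> 'b) \<Rightarrow> bool" where
  "legal_widget n p \<longleftrightarrow> (\<forall>S. widget_section n p S \<longrightarrow> dim (span S) \<le> n - 1)"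

definition full_widget :: "nat \<Rightarrow> (nat \<Rightarrow> 'b \<times> 'b) \<Rightarrow> bool" where
  "full_widget n p \<longleftrightarrow> dim (span (widget_points n p)) \<ge> n"

definition valid_widget :: "nat \<Rightarrow> (nat \<Rightarrow> 'b \<times> 'b) \<Rightarrow> bool" where
  "valid_widget n p \<longleftrightarrow> legal_widget n p \<and> full_widget n p"

end

end

theory Submission
  imports Defs
begin

context vector_space
begin

lemma dim_insert_le_fin:
  assumes "finite R"
  shows "dim (insert x R) \<le> dim R + 1"
    and "x \<notin> span R \<Longrightarrow> dim (insert x R) = dim R + 1"
proof -
  obtain B where B: "B \<subseteq> R" "independent B" "R \<subseteq> span B"
    using maximal_independent_subset[of R] by blast
  have fB: "finite B" using B(1) assms finite_subset by blast
  have cB: "card B = dim R" using basis_card_eq_dim[OF B(1) B(3) B(2)] .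
  have sub: "insert x R \<subseteq> span (insert x B)"
    using B(3) span_mono[of B "insert x B"] span_base[of x "insert x B"] by auto
  have "dim (insert x R) \<le> card (insert x B)"
    using dim_le_card[OF sub] fB by simp
  also have "\<dots> \<le> card B + 1" using fB by (simp add: card_insert_if)
  finally show "dim (insert x R) \<le> dim R + 1" using cB by simp
  assume nx: "x \<notin> span R"
  have sBR: "span B \<subseteq> span R" using B(1) span_mono by blast
  have nxB: "x \<notin> span B" using nx sBR by blast
  have "x \<notin> B" using nxB span_base by blast
  have ind: "independent (insert x B)" using independent_insertI[OF nxB B(2)] .
  have "card (insert x B) = dim (insert x R)"
    using basis_card_eq_dim[OF _ sub ind] B(1) by blast
  then show "dim (insert x R) = dim R + 1" using cB fB \<open>x \<notin> B\<close> by simp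
qed

lemma dim_mono_fin:
  assumes "V \<subseteq> span W" "finite W"
  shows "dim V \<le> dim W"
proof -
  obtain B where B: "B \<subseteq> W" "independent B" "W \<subseteq> span B"
    using maximal_independent_subset[of W] by blast
  have fB: "finite B" using B(1) assms(2) finite_subset by blast
  have "span W \<subseteq> span B" using B(3) span_minimal[OF _ subspace_span] by blast
  then have "V \<subseteq> span B" using assms(1) by blast
  then have "dim V \<le> card B" using dim_le_card fB by blast
  also have "card B = dim W" using basis_card_eq_dim[OF B(1) B(3) B(2)] .
  finally show ?thesis .
qed

lemma legal_mod:
  assumes L: "legal_widget n p" and i: "i \<in> {1..n}"
  shows "legal_widget n (p(i := (fst (p i) + scale c (snd (p i)), snd (p i))))"
  unfolding legal_widget_def
proof (intro allI impI)
  define a where "a = fst (p i)"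
  define b where "b = snd (p i)"
  define x where "x = a + scale c b"
  let ?q = "p(i := (fst (p i) + scale c (snd (p i)), snd (p i)))"
  have Lold: "\<And>S. widget_section n p S \<Longrightarrow> dim S \<le> n - 1"
    using L unfolding legal_widget_def by simp
  fix S assume "widget_section n ?q S"
  then obtain J \<sigma> where J: "J \<subseteq> {1..n}" and sig: "\<forall>j\<in>J. \<sigma> j \<in> {fst (?q j), snd (?q j)}"
    and S: "S = \<sigma> ` J" unfolding widget_section_def by blast
  show "dim (span S) \<le> n - 1"
  proof (cases "i \<in> J \<and> \<sigma> i = x")
    case False
    have "\<forall>j\<in>J. \<sigma> j \<in> {fst (p j), snd (p j)}"
    proof
      fix j assume "j \<in> J"
      then show "\<sigma> j \<in> {fst (p j), snd (p j)}"
        using sig False by (cases "j = i") (auto simp: x_def a_def b_def)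
    qed
    then have "widget_section n p S" unfolding widget_section_def using J S by blast
    then show ?thesis using Lold by simp
  next
    case True
    define R where "R = \<sigma> ` (J - {i})"
    have SR: "S = insert x R" using True S R_def by auto
    have fR: "finite R" unfolding R_def using J finite_subset by blast
    have secj: "\<forall>j\<in>J - {i}. \<sigma> j \<in> {fst (p j), snd (p j)}" using sig by auto
    have Ta: "widget_section n p (insert a R)"
      unfolding widget_section_def
      apply (rule exI[of _ J], rule exI[of _ "\<sigma>(i := a)"])
      using J secj True unfolding R_def a_def by auto
    have Tb: "widget_section n p (insert b R)"
      unfolding widget_section_def
      apply (rule exI[of _ J], rule exI[of _ "\<sigma>(i := b)"])
      using J secj True unfolding R_def b_def by auto
    show ?thesis
    proof (cases "b \<in> span R")
      case True
      have "insert x R \<subseteq> span (insert a R)"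
      proof -
        have "a \<in> span (insert a R)" by (rule span_base) simp
        moreover have "b \<in> span (insert a R)" using True span_mono[of R "insert a R"] by auto
        ultimately have "x \<in> span (insert a R)" unfolding x_def
          by (intro span_add span_scale)
        then show ?thesis using span_base[of _ "insert a R"] by auto
      qed
      then have "dim (insert x R) \<le> dim (insert a R)" by (rule dim_mono_fin) (use fR in simp)
      then show ?thesis using Lold[OF Ta] SR by simp
    next
      case False
      have "dim (insert x R) \<le> dim R + 1" by (rule dim_insert_le_fin(1)[OF fR])
      also have "\<dots> = dim (insert b R)" using dim_insert_le_fin(2)[OF fR False] by simp
      finally show ?thesis using Lold[OF Tb] SR by simp
    qed
  qed
qed

lemma full_mod:
  assumes F: "full_widget n p" and i: "i \<in> {1..n}"
  shows "full_widget n (p(i := (fst (p i) + scale c (snd (p i)), snd (p i))))"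
proof -
  let ?q = "p(i := (fst (p i) + scale c (snd (p i)), snd (p i)))"
  have "widget_points n p \<subseteq> span (widget_points n ?q)"
  proof
    fix y assume "y \<in> widget_points n p"
    then obtain j where j: "j \<in> {1..n}" and y: "y = fst (p j) \<or> y = snd (p j)"
      unfolding widget_points_def by auto
    show "y \<in> span (widget_points n ?q)"
    proof (cases "j = i")
      case False
      then have "y \<in> widget_points n ?q" using j y unfolding widget_points_def by force
      then show ?thesis by (rule span_base)
    next
      case True
      have b: "snd (p i) \<in> span (widget_points n ?q)"
        by (rule span_base) (use i in \<open>force simp: widget_points_def\<close>)
      have x: "fst (p i) + scale c (snd (p i)) \<in> span (widget_points n ?q)"
        by (rule span_base) (use i in \<open>force simp: widget_points_def\<close>)
      have "fst (p i) = (fst (p i) + scale c (snd (p i))) - scale c (snd (p i))" by simp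
      then have "fst (p i) \<in> span (widget_points n ?q)"
        using span_diff[OF x span_scale[OF b]] by metis
      then show ?thesis using y True b by auto
    qed
  qed
  then have "dim (widget_points n p) \<le> dim (widget_points n ?q)" by (rule dim_mono_fin) (simp add: widget_points_def)
  then show ?thesis using F unfolding full_widget_def by simp
qed

end

theorem lemma2:
  fixes scale :: "'a::field \<Rightarrow> 'v::ab_group_add \<Rightarrow> 'v"
    and n :: nat and p :: "nat \<Rightarrow> 'v \<times> 'v" and i :: nat and c :: 'a
  assumes "vector_space scale"
    and "n \<ge> 1"
    and "vector_space.valid_widget scale n p"
    and "i \<in> {1..n}"
  shows "vector_space.valid_widget scale n
           (p(i := (fst (p i) + scale c (snd (p i)), snd (p i))))"
  using assms vector_space.legal_mod[OF assms(1)] vector_space.full_mod[OF assms(1)]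
  unfolding vector_space.valid_widget_def[OF assms(1)] by blast

end
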